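(* Let $D\ge 2$ and $\eta=\mathrm{diag}(-1,1,\dots,1)$. Let $g_{\mu\nu}$ and $f_{\mu\nu}$ be two real symmetric invertible $D\times D$ matrices of Lorentzian signature $(-,+,\dots,+)$ (the two metrics at a point). Let $L^A{}_\mu$ be any real matrix with $\eta_{AB}L^A{}_\mu L^B{}_\nu=f_{\mu\nu}$, and let $e_A{}^\mu$ be any real matrix with $\eta^{AB}e_A{}^\mu e_B{}^\nu=g^{\mu\nu}$ (where $g^{\mu\nu}$ is the inverse of $g_{\mu\nu}$). Define the matrix $M$ with components $M^{AB}=e^{A\mu}L^B{}_\mu$, where $e^{A\mu}=\eta^{AC}e_C{}^\mu$. Then $g^{-1}f$ has a real square root $\gamma$ of the form $\gamma=f^{-1}s$ with $s$ a real symmetric matrix if and only if the real matrix $\eta M^t\eta M$ has a real square root which can be written as the product of $\eta$ with a real symmetric matrix.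
   Context: Greek indices are space-time indices and capital Latin indices are Lorentz indices, moved with $\eta_{AB}$; repeated indices are summed. $m^t$ denotes transpose; a square root of $A$ is a matrix $\gamma$ with $\gamma^2=A$. The matrix $M$ is invertible. *)

theory Defs
  imports "HOL-Analysis.Analysis"
begin

definition eta :: "'n::finite \<Rightarrow> real^'n^'n" where
  "eta t0 = (\<chi> i j. if i = j then (if i = t0 then -1 else 1) else 0)"

definition symmetric_mat :: "real^'n^'n \<Rightarrow> bool" where
  "symmetric_mat A \<longleftrightarrow> transpose A = A"

text \<open>Lorentzian signature (-,+,...,+): symmetric, invertible, and congruent to eta
  (Sylvester's law of inertia: signature = congruence class).\<close>
definition lorentzian :: "'n::finite \<Rightarrow> real^'n^'n \<Rightarrow> bool" where
  "lorentzian t0 g \<longleftrightarrow> symmetric_mat g \<and> invertible g \<and>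
     (\<exists>P::real^'n^'n. invertible P \<and> transpose P ** g ** P = eta t0)"

end

theory Submission
  imports Defs
begin

lemma eta_sq: "eta t0 ** eta t0 = mat 1"
proof -
  define d :: "_ \<Rightarrow> real" where "d i = (if i = t0 then -1 else 1)" for i
  have ent: "eta t0 $ i $ k = (if i = k then d i else 0)" for i k
    by (simp add: eta_def d_def)
  have dd: "d i * d i = 1" for i by (simp add: d_def)
  show ?thesis
    by (simp add: vec_eq_iff matrix_matrix_mult_def mat_def ent if_distrib[of "\<lambda>x. x * _"] dd
         sum.delta cong: if_cong)
qed

lemma eta_T: "transpose (eta t0) = eta t0"
  by (auto simp: eta_def transpose_def vec_eq_iff)

lemma minv: fixes A :: "real^'n^'n" assumes "invertible A"
  shows "A ** matrix_inv A = mat 1" "matrix_inv A ** A = mat 1"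
proof -
  have "\<exists>A'. A ** A' = mat 1 \<and> A' ** A = mat 1" using assms invertible_def by blast
  hence "A ** matrix_inv A = mat 1 \<and> matrix_inv A ** A = mat 1"
    unfolding matrix_inv_def by (rule someI_ex)
  thus "A ** matrix_inv A = mat 1" "matrix_inv A ** A = mat 1" by auto
qed

lemma minv_unique: fixes A B :: "real^'n^'n" assumes "invertible A" "B ** A = mat 1"
  shows "matrix_inv A = B"
proof -
  have "B = B ** (A ** matrix_inv A)" using minv(1)[OF assms(1)] by simp
  also have "\<dots> = matrix_inv A" by (simp add: matrix_mul_assoc assms(2))
  finally show ?thesis by simp
qed

lemma canc: fixes A B X :: "real^'n^'n" assumes "A ** B = mat 1"
  shows "A ** (B ** X) = X"
  by (simp add: matrix_mul_assoc assms)

theorem proposition2: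
  fixes g f L e :: "real^'n::finite^'n" and t0 :: 'n
  assumes "CARD('n) \<ge> 2"
    and "symmetric_mat g" "invertible g" "lorentzian t0 g"
    and "symmetric_mat f" "invertible f" "lorentzian t0 f"
    and "transpose L ** eta t0 ** L = f"
    and "transpose e ** eta t0 ** e = matrix_inv g"
  shows "(\<exists>\<gamma> s :: real^'n^'n. \<gamma> ** \<gamma> = matrix_inv g ** f \<and> symmetric_mat s
              \<and> \<gamma> = matrix_inv f ** s)
     \<longleftrightarrow> (let M = eta t0 ** e ** transpose L in
          \<exists>\<rho> s :: real^'n^'n. \<rho> ** \<rho> = eta t0 ** transpose M ** eta t0 ** M
              \<and> symmetric_mat s \<and> \<rho> = eta t0 ** s)"
proof -
  define E where "E = eta t0"
  define G where "G = matrix_inv g"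
  have EE: "E ** E = mat 1" and ET: "transpose E = E" unfolding E_def by (rule eta_sq, rule eta_T)
  have fL: "f = transpose L ** E ** L" using assms(8) E_def by simp
  have eG: "transpose e ** E ** e = G" using assms(9) E_def G_def by simp
  obtain F0 where "F0 ** f = mat 1" using assms(6) invertible_left_inverse by blast
  hence "(F0 ** transpose L ** E) ** L = mat 1" using fL by (simp add: matrix_mul_assoc)
  hence invL: "invertible L" using invertible_left_inverse by blast
  define Li where "Li = matrix_inv L"
  have L1: "L ** Li = mat 1" and L2: "Li ** L = mat 1" using minv[OF invL] Li_def by auto
  have LT1: "transpose L ** transpose Li = mat 1" and LT2: "transpose Li ** transpose L = mat 1"
    using arg_cong[OF L2, of transpose] arg_cong[OF L1, of transpose]
    by (simp_all add: matrix_transpose_mul)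
  note A = matrix_mul_assoc[symmetric]
  note C = canc[OF EE] canc[OF L1] canc[OF L2] canc[OF LT1] canc[OF LT2]
  have "(Li ** E ** transpose Li) ** f = mat 1"
    using fL by (simp add: A C EE L2)
  hence Fi: "matrix_inv f = Li ** E ** transpose Li" using minv_unique[OF assms(6)] by simp
  define M where "M = E ** e ** transpose L"
  have N: "E ** transpose M ** E ** M = E ** L ** G ** transpose L"
    unfolding M_def eG[symmetric] by (simp add: A C matrix_transpose_mul ET)
  show ?thesis
    unfolding Let_def E_def[symmetric] M_def[symmetric] G_def[symmetric] N Fi
  proof
    assume "\<exists>\<gamma> s. \<gamma> ** \<gamma> = G ** f \<and> symmetric_mat s \<and> \<gamma> = Li ** E ** transpose Li ** s"
    then obtain \<gamma> s where g1: "\<gamma> ** \<gamma> = G ** f" and s1: "transpose s = s"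
      and g2: "\<gamma> = Li ** E ** transpose Li ** s" unfolding symmetric_mat_def by blast
    define s' where "s' = L ** \<gamma> ** Li ** E"
    have "(E ** s') ** (E ** s') = E ** L ** (\<gamma> ** \<gamma>) ** Li ** E"
      unfolding s'_def by (simp add: A C)
    also have "\<dots> = E ** L ** G ** transpose L"
      unfolding g1 fL by (simp add: A C EE)
    finally have r1: "(E ** s') ** (E ** s') = E ** L ** G ** transpose L" .
    have "symmetric_mat s'"
      unfolding symmetric_mat_def s'_def g2
      by (simp add: A C matrix_transpose_mul ET s1)
    thus "\<exists>\<rho> s. \<rho> ** \<rho> = E ** L ** G ** transpose L \<and> symmetric_mat s \<and> \<rho> = E ** s"
      using r1 by blast
  next
    assume "\<exists>\<rho> s. \<rho> ** \<rho> = E ** L ** G ** transpose L \<and> symmetric_mat s \<and> \<rho> = E ** s"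
    then obtain \<rho> s' where r1: "\<rho> ** \<rho> = E ** L ** G ** transpose L" and s1: "transpose s' = s'"
      and r2: "\<rho> = E ** s'" unfolding symmetric_mat_def by blast
    define s where "s = transpose L ** E ** s' ** E ** L"
    define \<gamma> where "\<gamma> = Li ** s' ** E ** L"
    have "\<gamma> = Li ** E ** \<rho> ** E ** L" unfolding \<gamma>_def r2 by (simp add: A C)
    hence "\<gamma> ** \<gamma> = Li ** E ** (\<rho> ** \<rho>) ** E ** L" by (simp add: A C)
    also have "\<dots> = G ** f" unfolding r1 fL by (simp add: A C)
    finally have g1: "\<gamma> ** \<gamma> = G ** f" .
    have "symmetric_mat s" unfolding symmetric_mat_def s_def
      by (simp add: A matrix_transpose_mul ET s1)
    moreover have "\<gamma> = Li ** E ** transpose Li ** s"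
      unfolding \<gamma>_def s_def by (simp add: A C)
    ultimately show "\<exists>\<gamma> s. \<gamma> ** \<gamma> = G ** f \<and> symmetric_mat s \<and> \<gamma> = Li ** E ** transpose Li ** s"
      using g1 by blast
  qed
qed

end
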